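(* Suppose $\rho,\sigma\in\mathbb{C}^{d\times d}$ are quantum states with $D_H^2(\rho\|\sigma)\le\varepsilon$, where $0 < \varepsilon \le 2$. Then for $\sigma' = \Delta_{\varepsilon/2}(\sigma)$ we have $D_{KL}(\rho\|\sigma') \le 4\varepsilon\,(2 + \ln(2d/\varepsilon))$.
   Context: $D_H^2(\rho\|\sigma) = \mathrm{tr}((\sqrt\rho-\sqrt\sigma)^2)$. For $0\le\epsilon\le1$, $\Delta_\epsilon(\sigma) = (1-\epsilon)\sigma + \epsilon I/d$. $D_{KL}(\rho\|\sigma)=\mathrm{tr}(\rho(\ln\rho-\ln\sigma))$. *)

theory Defs
  imports Complex_Main "Jordan_Normal_Form.Matrix"
begin

definition ctrace :: "complex mat \<Rightarrow> complex" where
  "ctrace A = (\<Sum>i<dim_row A. A $$ (i,i))"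

definition cadj :: "complex mat \<Rightarrow> complex mat" where
  "cadj A = mat (dim_col A) (dim_row A) (\<lambda>(i,j). cnj (A $$ (j,i)))"

definition unitary_mat :: "nat \<Rightarrow> complex mat \<Rightarrow> bool" where
  "unitary_mat d U \<longleftrightarrow> U \<in> carrier_mat d d \<and> U * cadj U = 1\<^sub>m d \<and> cadj U * U = 1\<^sub>m d"

definition hermitian_mat :: "nat \<Rightarrow> complex mat \<Rightarrow> bool" where
  "hermitian_mat d A \<longleftrightarrow> A \<in> carrier_mat d d \<and> cadj A = A"

definition rdiag :: "nat \<Rightarrow> (nat \<Rightarrow> real) \<Rightarrow> complex mat" where
  "rdiag d l = mat d d (\<lambda>(i,j). if i = j then complex_of_real (l i) else 0)"

definition psd_mat :: "nat \<Rightarrow> complex mat \<Rightarrow> bool" where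
  "psd_mat d A \<longleftrightarrow> hermitian_mat d A \<and>
     (\<forall>v \<in> carrier_vec d. 0 \<le> Re (conjugate v \<bullet> (A *\<^sub>v v)))"

definition quantum_state :: "nat \<Rightarrow> complex mat \<Rightarrow> bool" where
  "quantum_state d \<rho> \<longleftrightarrow> psd_mat d \<rho> \<and> ctrace \<rho> = 1"

text \<open>Functional calculus for Hermitian matrices via a spectral decomposition
  A = U diag(l) U^*; the result is independent of the chosen decomposition.\<close>
definition mat_fun :: "nat \<Rightarrow> (real \<Rightarrow> real) \<Rightarrow> complex mat \<Rightarrow> complex mat" where
  "mat_fun d f A = (SOME B. \<exists>U l. unitary_mat d U \<and> A = U * rdiag d l * cadj U \<and>
                              B = U * rdiag d (f \<circ> l) * cadj U)"

definition msqrt :: "nat \<Rightarrow> complex mat \<Rightarrow> complex mat" where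
  "msqrt d A = mat_fun d sqrt A"

text \<open>Matrix logarithm; on zero eigenvalues Isabelle's ln 0 = 0, which realises the
  usual convention 0 ln 0 = 0 inside tr(rho ln rho).\<close>
definition mln :: "nat \<Rightarrow> complex mat \<Rightarrow> complex mat" where
  "mln d A = mat_fun d ln A"

definition hellinger_sq :: "nat \<Rightarrow> complex mat \<Rightarrow> complex mat \<Rightarrow> real" where
  "hellinger_sq d \<rho> \<sigma> = Re (ctrace ((msqrt d \<rho> - msqrt d \<sigma>) * (msqrt d \<rho> - msqrt d \<sigma>)))"

definition depolarize :: "nat \<Rightarrow> real \<Rightarrow> complex mat \<Rightarrow> complex mat" where
  "depolarize d \<epsilon> \<sigma> = complex_of_real (1 - \<epsilon>) \<cdot>\<^sub>m \<sigma> + complex_of_real (\<epsilon> / real d) \<cdot>\<^sub>m 1\<^sub>m d"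

definition rel_entropy :: "nat \<Rightarrow> complex mat \<Rightarrow> complex mat \<Rightarrow> real" where
  "rel_entropy d \<rho> \<sigma> = Re (ctrace (\<rho> * (mln d \<rho> - mln d \<sigma>)))"

end

theory Submission
  imports Defs "Jordan_Normal_Form.Char_Poly"
begin


lemma dim_cadj[simp]: "dim_row (cadj A) = dim_col A" "dim_col (cadj A) = dim_row A"
  by (auto simp: cadj_def)

lemma cadj_carrier[simp]: "A \<in> carrier_mat n m \<Longrightarrow> cadj A \<in> carrier_mat m n"
  by (auto simp: cadj_def)

lemma index_cadj[simp]: "i < dim_col A \<Longrightarrow> j < dim_row A \<Longrightarrow> cadj A $$ (i,j) = cnj (A $$ (j,i))"
  by (auto simp: cadj_def)

lemma cadj_cadj[simp]: "cadj (cadj A) = A"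
  by (rule eq_matI) auto

lemma cadj_mult: assumes "A \<in> carrier_mat n m" "B \<in> carrier_mat m k"
  shows "cadj (A*B) = cadj B * cadj A"
  using assms by (intro eq_matI) (auto simp: scalar_prod_def mult.commute intro!: sum.cong)

lemma cadj_one[simp]: "cadj (1\<^sub>m n) = 1\<^sub>m n"
  by (rule eq_matI) auto

lemma ctrace_comm: assumes "A \<in> carrier_mat n m" "B \<in> carrier_mat m n"
  shows "ctrace (A*B) = ctrace (B*A)"
proof -
  have "ctrace (A*B) = (\<Sum>i<n. \<Sum>k<m. A $$ (i,k) * B $$ (k,i))"
    using assms by (auto simp: ctrace_def scalar_prod_def atLeast0LessThan intro!: sum.cong)
  also have "\<dots> = (\<Sum>k<m. \<Sum>i<n. B $$ (k,i) * A $$ (i,k))"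
    by (subst sum.swap) (simp add: mult.commute)
  also have "\<dots> = ctrace (B*A)"
    using assms by (auto simp: ctrace_def scalar_prod_def atLeast0LessThan intro!: sum.cong)
  finally show ?thesis .
qed

lemma rdiag_carrier[simp]: "rdiag n a \<in> carrier_mat n n"
  by (simp add: rdiag_def)

lemma dim_rdiag[simp]: "dim_row (rdiag n a) = n" "dim_col (rdiag n a) = n"
  by (auto simp: rdiag_def)

lemma index_rdiag[simp]: "i < n \<Longrightarrow> j < n \<Longrightarrow> rdiag n a $$ (i,j) = (if i = j then complex_of_real (a i) else 0)"
  by (simp add: rdiag_def)

lemma sum_delta_mult: fixes f :: "nat \<Rightarrow> complex" shows "(i::nat) < n \<Longrightarrow> (\<Sum>k\<in>{0..<n}. (if i = k then c else 0) * f k) = c * f i"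
proof -
  assume i: "i < n"
  have "(\<Sum>k\<in>{0..<n}. (if i = k then c else 0) * f k) = (\<Sum>k\<in>{0..<n}. (if i = k then c * f i else 0))"
    by (rule sum.cong) auto
  also have "\<dots> = c * f i" using i by (simp add: sum.delta)
  finally show ?thesis .
qed

lemma sum_delta_mult': fixes f :: "nat \<Rightarrow> complex" shows "(j::nat) < n \<Longrightarrow> (\<Sum>k\<in>{0..<n}. f k * (if k = j then c else 0)) = f j * c"
proof -
  assume i: "j < n"
  have "(\<Sum>k\<in>{0..<n}. f k * (if k = j then c else 0)) = (\<Sum>k\<in>{0..<n}. (if k = j then f j * c else 0))"
    by (rule sum.cong) auto
  also have "\<dots> = f j * c" using i by (simp add: sum.delta')
  finally show ?thesis .
qed

lemma rdiag_mult_left: assumes "M \<in> carrier_mat n m" "i < n" "j < m"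
  shows "(rdiag n a * M) $$ (i,j) = a i * M $$ (i,j)"
proof -
  have "(rdiag n a * M) $$ (i,j) = (\<Sum>k\<in>{0..<n}. (if i = k then complex_of_real (a i) else 0) * M $$ (k,j))"
    using assms by (auto simp: scalar_prod_def intro!: sum.cong)
  also have "\<dots> = a i * M $$ (i,j)" using assms
    by (rule_tac sum_delta_mult) auto
  finally show ?thesis .
qed

lemma rdiag_mult_right: assumes "M \<in> carrier_mat m n" "i < m" "j < n"
  shows "(M * rdiag n a) $$ (i,j) = M $$ (i,j) * a j"
proof -
  have "(M * rdiag n a) $$ (i,j) = (\<Sum>k\<in>{0..<n}. M $$ (i,k) * (if k = j then complex_of_real (a j) else 0))"
    using assms by (auto simp: scalar_prod_def intro!: sum.cong)
  also have "\<dots> = M $$ (i,j) * a j" using assms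
    by (rule_tac sum_delta_mult') auto
  finally show ?thesis .
qed

lemma rdiag_mult: "rdiag n a * rdiag n b = rdiag n (\<lambda>i. a i * b i)"
proof (rule eq_matI)
  fix i j assume "i < dim_row (rdiag n (\<lambda>i. a i * b i))" "j < dim_col (rdiag n (\<lambda>i. a i * b i))"
  then show "(rdiag n a * rdiag n b) $$ (i, j) = rdiag n (\<lambda>i. a i * b i) $$ (i, j)"
    using rdiag_mult_left[of "rdiag n b" n n i j a] by auto
qed auto

lemma ctrace_rdiag: "ctrace (rdiag n a) = of_real (\<Sum>i<n. a i)"
  by (simp add: ctrace_def)

lemma unitaryD: assumes "unitary_mat d U"
  shows "U \<in> carrier_mat d d" "U * cadj U = 1\<^sub>m d" "cadj U * U = 1\<^sub>m d"
  using assms by (auto simp: unitary_mat_def)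

lemma udiag_carrier[simp]: "U \<in> carrier_mat d d \<Longrightarrow> U * rdiag d a * cadj U \<in> carrier_mat d d"
  by auto

lemma udiag_mult: assumes "unitary_mat d U"
  shows "(U * rdiag d a * cadj U) * (U * rdiag d b * cadj U) = U * rdiag d (\<lambda>i. a i * b i) * cadj U"
proof -
  note u = unitaryD[OF assms]
  have as: "\<And>A B C. A \<in> carrier_mat d d \<Longrightarrow> B \<in> carrier_mat d d \<Longrightarrow> C \<in> carrier_mat d d \<Longrightarrow> A*B*C = A*(B*C)"
    by (rule assoc_mult_mat)
  have mc: "\<And>A B. A \<in> carrier_mat d d \<Longrightarrow> B \<in> carrier_mat d d \<Longrightarrow> A*B \<in> carrier_mat d d"
    by auto
  have c: "\<And>X. X \<in> carrier_mat d d \<Longrightarrow> cadj U * (U * X) = X"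
    using u by (simp add: as[symmetric] mc)
  have r: "\<And>X. X \<in> carrier_mat d d \<Longrightarrow> rdiag d a * (rdiag d b * X) = rdiag d (\<lambda>i. a i * b i) * X"
    by (simp add: as[symmetric] rdiag_mult mc)
  show ?thesis using u(1) by (simp add: as c r mc)
qed

lemma ctrace_udiag: assumes "unitary_mat d U"
  shows "ctrace (U * rdiag d a * cadj U) = of_real (\<Sum>i<d. a i)"
proof -
  note u = unitaryD[OF assms]
  have "ctrace (U * rdiag d a * cadj U) = ctrace (U * (rdiag d a * cadj U))"
    using u(1) by (simp add: assoc_mult_mat[of _ d d _ d _ d])
  also have "\<dots> = ctrace ((rdiag d a * cadj U) * U)"
    by (rule ctrace_comm[of _ d d]) (use u(1) in auto)
  also have "\<dots> = ctrace (rdiag d a)"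
    using u by (simp add: assoc_mult_mat[of _ d d _ d _ d])
  finally show ?thesis by (simp add: ctrace_rdiag)
qed

lemma ctrace_two: assumes "unitary_mat d U" "unitary_mat d V"
  shows "ctrace ((U * rdiag d a * cadj U) * (V * rdiag d b * cadj V)) =
    of_real (\<Sum>i<d. \<Sum>j<d. a i * b j * (cmod ((cadj U * V) $$ (i,j)))^2)"
proof -
  note u = unitaryD[OF assms(1)] and v = unitaryD[OF assms(2)]
  have as: "\<And>A B C. A \<in> carrier_mat d d \<Longrightarrow> B \<in> carrier_mat d d \<Longrightarrow> C \<in> carrier_mat d d \<Longrightarrow> A*B*C = A*(B*C)"
    by (rule assoc_mult_mat)
  have mc: "\<And>A B. A \<in> carrier_mat d d \<Longrightarrow> B \<in> carrier_mat d d \<Longrightarrow> A*B \<in> carrier_mat d d"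
    by auto
  define W where "W = cadj U * V"
  have W: "W \<in> carrier_mat d d" using u v by (simp add: W_def mc)
  have cW: "cadj W = cadj V * U" using u v by (simp add: W_def cadj_mult[of _ d d _ d])
  have "ctrace ((U * rdiag d a * cadj U) * (V * rdiag d b * cadj V)) =
        ctrace (U * (rdiag d a * (cadj U * (V * (rdiag d b * cadj V)))))"
    using u v by (simp add: as mc)
  also have "\<dots> = ctrace ((rdiag d a * (cadj U * (V * (rdiag d b * cadj V)))) * U)"
    by (rule ctrace_comm[of _ d d]) (use u v in \<open>auto simp: mc\<close>)
  also have "\<dots> = ctrace (rdiag d a * (W * (rdiag d b * cadj W)))"
    using u v unfolding cW by (simp add: as mc W_def)
  also have "\<dots> = (\<Sum>i<d. of_real (a i) * (W * (rdiag d b * cadj W)) $$ (i,i))"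
    unfolding ctrace_def
  proof (rule sum.cong)
    show "{..<dim_row (rdiag d a * (W * (rdiag d b * cadj W)))} = {..<d}" by simp
    fix i assume "i \<in> {..<d}"
    then show "(rdiag d a * (W * (rdiag d b * cadj W))) $$ (i,i) = of_real (a i) * (W * (rdiag d b * cadj W)) $$ (i,i)"
      using W by (intro rdiag_mult_left[of _ d d]) auto
  qed
  also have "\<dots> = (\<Sum>i<d. of_real (a i) * (\<Sum>j<d. W $$ (i,j) * (of_real (b j) * cnj (W $$ (i,j)))))"
  proof (rule sum.cong[OF refl])
    fix i assume i: "i \<in> {..<d}"
    have "(W * (rdiag d b * cadj W)) $$ (i,i) = (\<Sum>j\<in>{0..<d}. W $$ (i,j) * (rdiag d b * cadj W) $$ (j,i))"
      using W i by (auto simp: scalar_prod_def intro!: sum.cong)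
    also have "\<dots> = (\<Sum>j<d. W $$ (i,j) * (of_real (b j) * cnj (W $$ (i,j))))"
      using W i by (auto simp del: index_mult_mat simp: rdiag_mult_left[of "cadj W" d d] atLeast0LessThan intro!: sum.cong)
    finally show "of_real (a i) * (W * (rdiag d b * cadj W)) $$ (i,i) = of_real (a i) * (\<Sum>j<d. W $$ (i,j) * (of_real (b j) * cnj (W $$ (i,j))))"
      by simp
  qed
  also have "\<dots> = of_real (\<Sum>i<d. \<Sum>j<d. a i * b j * (cmod (W $$ (i,j)))^2)"
  proof -
    have nz: "\<And>z. z * cnj z = (complex_of_real (cmod z))^2"
      by (simp add: complex_mult_cnj cmod_power2 flip: of_real_power)
    show ?thesis by (simp add: sum_distrib_left mult_ac nz)
  qed
  finally show ?thesis by (simp add: W_def)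
qed

lemma unitary_cadj: "unitary_mat d U \<Longrightarrow> unitary_mat d (cadj U)"
  by (auto simp: unitary_mat_def)

lemma unitary_mult: assumes "unitary_mat d U" "unitary_mat d V"
  shows "unitary_mat d (U * V)"
proof -
  note u = unitaryD[OF assms(1)] and v = unitaryD[OF assms(2)]
  have as: "\<And>A B C. A \<in> carrier_mat d d \<Longrightarrow> B \<in> carrier_mat d d \<Longrightarrow> C \<in> carrier_mat d d \<Longrightarrow> A*B*C = A*(B*C)"
    by (rule assoc_mult_mat)
  have mc: "\<And>A B. A \<in> carrier_mat d d \<Longrightarrow> B \<in> carrier_mat d d \<Longrightarrow> A*B \<in> carrier_mat d d"
    by auto
  have c: "cadj (U*V) = cadj V * cadj U" using u v by (simp add: cadj_mult[of _ d d _ d])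
  have 1: "U * V * (cadj V * cadj U) = 1\<^sub>m d"
    using u v by (simp add: as mc as[symmetric, of U V] as[symmetric, of V "cadj V"])
  have 2: "cadj V * cadj U * (U * V) = 1\<^sub>m d"
    using u v by (simp add: as mc as[symmetric, of "cadj V" "cadj U"] as[symmetric, of "cadj U" U])
  show ?thesis using u v 1 2 c by (simp add: unitary_mat_def mc)
qed

lemma unitary_row_norm: assumes "unitary_mat d W" "i < d"
  shows "(\<Sum>j<d. (cmod (W $$ (i,j)))^2) = 1"
proof -
  note w = unitaryD[OF assms(1)]
  have nz: "\<And>z. z * cnj z = complex_of_real ((cmod z)^2)"
    by (simp add: complex_mult_cnj cmod_power2)
  have "complex_of_real 1 = (W * cadj W) $$ (i,i)" using w assms(2) by simp
  also have "\<dots> = (\<Sum>j\<in>{0..<d}. W $$ (i,j) * cnj (W $$ (i,j)))"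
    using w(1) assms(2) by (auto simp: scalar_prod_def intro!: sum.cong)
  also have "\<dots> = complex_of_real (\<Sum>j<d. (cmod (W $$ (i,j)))^2)"
    by (simp add: nz atLeast0LessThan)
  finally show ?thesis by (simp only: of_real_eq_iff)
qed

lemma unitary_col_norm: assumes "unitary_mat d W" "j < d"
  shows "(\<Sum>i<d. (cmod (W $$ (i,j)))^2) = 1"
proof -
  have "(\<Sum>i<d. (cmod (W $$ (i,j)))^2) = (\<Sum>i<d. (cmod (cadj W $$ (j,i)))^2)"
    using unitaryD(1)[OF assms(1)] assms(2) by (auto intro!: sum.cong)
  also have "\<dots> = 1" by (rule unitary_row_norm[OF unitary_cadj[OF assms(1)] assms(2)])
  finally show ?thesis .
qed

lemma mat_fun_eq: assumes U: "unitary_mat d U" and A: "A = U * rdiag d l * cadj U"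
  shows "mat_fun d f A = U * rdiag d (f \<circ> l) * cadj U"
proof -
  have ex: "\<exists>B. \<exists>U l. unitary_mat d U \<and> A = U * rdiag d l * cadj U \<and> B = U * rdiag d (f \<circ> l) * cadj U"
    using U A by blast
  from someI_ex[OF ex] obtain U2 l2 where U2: "unitary_mat d U2" and A2: "A = U2 * rdiag d l2 * cadj U2"
    and B: "mat_fun d f A = U2 * rdiag d (f \<circ> l2) * cadj U2"
    unfolding mat_fun_def by blast
  note u = unitaryD[OF U] and u2 = unitaryD[OF U2]
  have as: "\<And>A B C. A \<in> carrier_mat d d \<Longrightarrow> B \<in> carrier_mat d d \<Longrightarrow> C \<in> carrier_mat d d \<Longrightarrow> A*B*C = A*(B*C)"
    by (rule assoc_mult_mat)
  have mc: "\<And>A B. A \<in> carrier_mat d d \<Longrightarrow> B \<in> carrier_mat d d \<Longrightarrow> A*B \<in> carrier_mat d d"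
    by auto
  define W where "W = cadj U2 * U"
  have W: "W \<in> carrier_mat d d" using u u2 by (simp add: W_def mc)
  have c1: "\<And>X. X \<in> carrier_mat d d \<Longrightarrow> cadj U * (U * X) = X"
    using u by (simp add: as[symmetric] mc)
  have c2: "\<And>X. X \<in> carrier_mat d d \<Longrightarrow> cadj U2 * (U2 * X) = X"
    using u2 by (simp add: as[symmetric] mc)
  have c3: "\<And>X. X \<in> carrier_mat d d \<Longrightarrow> U * (cadj U * X) = X"
    using u by (simp add: as[symmetric] mc)
  have c4: "\<And>X. X \<in> carrier_mat d d \<Longrightarrow> U2 * (cadj U2 * X) = X"
    using u2 by (simp add: as[symmetric] mc)
  have "rdiag d l2 * W = cadj U2 * A * U"
    using u u2 unfolding A2 W_def by (simp add: as mc c2)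
  also have "\<dots> = W * rdiag d l"
    using u u2 unfolding A W_def by (simp add: as mc c1)
  finally have comm: "rdiag d l2 * W = W * rdiag d l" .
  have commf: "rdiag d (f \<circ> l2) * W = W * rdiag d (f \<circ> l)"
  proof (rule eq_matI)
    fix i j assume ij: "i < dim_row (W * rdiag d (f \<circ> l))" "j < dim_col (W * rdiag d (f \<circ> l))"
    then have i: "i < d" and j: "j < d" using W by auto
    have e: "of_real (l2 i) * W $$ (i,j) = W $$ (i,j) * of_real (l j)"
      using arg_cong[OF comm, of "\<lambda>M. M $$ (i,j)"] W i j
      by (simp del: index_mult_mat add: rdiag_mult_left[of W d d] rdiag_mult_right[of W d d])
    have "of_real (f (l2 i)) * W $$ (i,j) = W $$ (i,j) * of_real (f (l j))"
    proof (cases "W $$ (i,j) = 0")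
      case False
      with e have "l2 i = l j" by (simp add: mult.commute)
      then show ?thesis by (simp add: mult.commute)
    qed simp
    then show "(rdiag d (f \<circ> l2) * W) $$ (i, j) = (W * rdiag d (f \<circ> l)) $$ (i, j)"
      using W i j
      by (simp del: index_mult_mat add: rdiag_mult_left[of W d d] rdiag_mult_right[of W d d])
  qed (use W in auto)
  have "mat_fun d f A = U2 * (rdiag d (f \<circ> l2) * (W * cadj U))"
    unfolding B W_def using u u2 by (simp add: as mc c3)
  also have "\<dots> = U2 * ((rdiag d (f \<circ> l2) * W) * cadj U)"
    using u u2 W by (simp add: as mc)
  also have "\<dots> = U * rdiag d (f \<circ> l) * cadj U"
    unfolding commf unfolding W_def using u u2 by (simp add: as mc c4)
  finally show ?thesis .
qed



lemma sum_split_at: fixes f :: "nat \<Rightarrow> 'a::comm_monoid_add"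
  assumes "k < d" shows "(\<Sum>m<d. f m) = f k + (\<Sum>m\<in>{..<d}-{k}. f m)"
  using assms by (subst sum.remove[of _ k]) auto

lemma householder:
  assumes z: "z \<in> carrier_vec d" and k: "k < d" and z0: "\<forall>i<k. z $ i = 0"
    and zn: "(\<Sum>i<d. (cmod (z $ i))^2) = 1" and zk: "z $ k = complex_of_real r"
  shows "\<exists>V. unitary_mat d V \<and> cadj V = V \<and> (\<forall>j<k. \<forall>i<d. V $$ (i,j) = (if i = j then 1 else 0))
           \<and> (\<forall>i<d. V $$ (i,k) = z $ i)"
proof (cases "r = 1")
  case True
  have "(\<Sum>i<d. (cmod (z $ i))^2) = (cmod (z $ k))^2 + (\<Sum>i\<in>{..<d}-{k}. (cmod (z $ i))^2)"
    by (rule sum_split_at[OF k])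
  then have "(\<Sum>i\<in>{..<d}-{k}. (cmod (z $ i))^2) = 0" using zn zk True by simp
  then have "\<forall>i\<in>{..<d}-{k}. (cmod (z $ i))^2 = 0"
    by (subst (asm) sum_nonneg_eq_0_iff) auto
  then have zi: "\<And>i. i < d \<Longrightarrow> i \<noteq> k \<Longrightarrow> z $ i = 0" by auto
  show ?thesis
    by (rule exI[of _ "1\<^sub>m d"]) (use zi zk True k in \<open>auto simp: unitary_mat_def\<close>)
next
  case False
  have "(cmod (z $ k))^2 \<le> (\<Sum>i<d. (cmod (z $ i))^2)"
    by (rule member_le_sum) (use k in auto)
  then have "r^2 \<le> 1" using zn zk by simp
  then have "r \<le> 1" by (metis abs_le_D1 abs_square_le_1) 
  with False have r1: "r < 1" by simp
  define w where "w = (\<lambda>i. (if i = k then 1 else 0) - z $ i)"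
  define c where "c = 1 / (1 - r)"
  define V where "V = mat d d (\<lambda>(i,j). (if i = j then 1 else 0) - complex_of_real c * w i * cnj (w j))"
  have V: "V \<in> carrier_mat d d" by (simp add: V_def)
  have wk: "w k = complex_of_real (1 - r)" using zk by (simp add: w_def)
  have wj: "\<And>j. j < k \<Longrightarrow> w j = 0" using z0 by (auto simp: w_def)
  have cr: "c * (1 - r) = 1" using r1 by (simp add: c_def)
  have wn: "(\<Sum>m<d. w m * cnj (w m)) = complex_of_real (2 - 2 * r)"
  proof -
    have nz: "\<And>z. z * cnj z = complex_of_real ((cmod z)^2)"
      by (simp add: complex_mult_cnj cmod_power2)
    have "(\<Sum>m<d. (cmod (w m))^2) = (cmod (w k))^2 + (\<Sum>m\<in>{..<d}-{k}. (cmod (w m))^2)"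
      by (rule sum_split_at[OF k])
    also have "(\<Sum>m\<in>{..<d}-{k}. (cmod (w m))^2) = (\<Sum>m\<in>{..<d}-{k}. (cmod (z $ m))^2)"
      by (rule sum.cong) (auto simp: w_def)
    also have "\<dots> = 1 - (cmod (z $ k))^2"
      using sum_split_at[OF k, of "\<lambda>i. (cmod (z $ i))^2"] zn by simp
    moreover have cw: "cmod (w k) = 1 - r" using r1 unfolding wk norm_of_real by simp
    ultimately have "(\<Sum>m<d. (cmod (w m))^2) = 2 - 2 * r"
      using zk by (simp add: power2_eq_square algebra_simps)
    moreover have "(\<Sum>m<d. w m * cnj (w m)) = complex_of_real (\<Sum>m<d. (cmod (w m))^2)"
      by (simp only: nz of_real_sum)
    ultimately show ?thesis by simp
  qed
  have cadjV: "cadj V = V"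
    by (rule eq_matI) (auto simp: V_def)
  have VV: "V * V = 1\<^sub>m d"
  proof (rule eq_matI)
    fix i j assume "i < dim_row (1\<^sub>m d)" "j < dim_col (1\<^sub>m d)"
    then have i: "i < d" and j: "j < d" by auto
    let ?C = "complex_of_real c"
    have "(V * V) $$ (i,j) = (\<Sum>m<d. ((if i = m then 1 else 0) - ?C * w i * cnj (w m)) * ((if m = j then 1 else 0) - ?C * w m * cnj (w j)))"
      using i j by (auto simp: V_def scalar_prod_def atLeast0LessThan intro!: sum.cong)
    also have "\<dots> = (\<Sum>m<d. (if i = m then 1 else 0) * (if m = j then 1 else 0))
        - (\<Sum>m<d. (if i = m then ?C * w m * cnj (w j) else 0))
        - (\<Sum>m<d. (if m = j then ?C * w i * cnj (w m) else 0))
        + ?C * ?C * w i * cnj (w j) * (\<Sum>m<d. w m * cnj (w m))"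
    proof -
      have pt: "\<And>m. ((if i = m then 1 else 0) - ?C * w i * cnj (w m)) * ((if m = j then 1 else 0) - ?C * w m * cnj (w j))
        = (if i = m then 1 else 0) * (if m = j then 1 else 0) - (if i = m then ?C * w m * cnj (w j) else 0)
          - (if m = j then ?C * w i * cnj (w m) else 0) + ?C * ?C * w i * cnj (w j) * (w m * cnj (w m))"
        by (cases "i = m"; cases "m = j") (simp_all add: algebra_simps)
      show ?thesis by (simp only: pt sum.distrib sum_subtractf sum_distrib_left)
    qed
    also have "\<dots> = (if i = j then 1 else 0) - ?C * w i * cnj (w j) - ?C * w i * cnj (w j)
        + ?C * ?C * w i * cnj (w j) * complex_of_real (2 - 2 * r)"
    proof -
      have dd: "(\<Sum>m<d. (if i = m then 1 else 0) * (if m = j then 1 else 0)) = (if i = j then (1::complex) else 0)"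
      proof -
        have "(\<Sum>m<d. (if i = m then 1 else 0) * (if m = j then 1 else 0)) = (\<Sum>m<d. if m = i then (if i = j then (1::complex) else 0) else 0)"
          by (rule sum.cong) auto
        then show ?thesis using i by simp
      qed
      show ?thesis using i j by (simp only: dd wn sum.delta sum.delta' finite_lessThan lessThan_iff if_True)
    qed
    also have "?C * ?C * w i * cnj (w j) * complex_of_real (2 - 2 * r) = 2 * ?C * w i * cnj (w j)"
    proof -
      have "c * c * (2 - 2 * r) = 2 * c * (c * (1 - r))" by (simp add: algebra_simps)
      then have "c * c * (2 - 2 * r) = 2 * c" using cr by simp
      then have "complex_of_real (c * c * (2 - 2 * r)) = complex_of_real (2 * c)" by (rule arg_cong)
      then have eq: "?C * ?C * complex_of_real (2 - 2 * r) = 2 * ?C"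
        by (simp only: of_real_mult of_real_numeral)
      have "?C * ?C * w i * cnj (w j) * complex_of_real (2 - 2 * r) = (?C * ?C * complex_of_real (2 - 2 * r)) * (w i * cnj (w j))"
        by (simp only: mult_ac)
      also have "\<dots> = 2 * ?C * (w i * cnj (w j))" by (simp only: eq)
      finally show ?thesis by (simp only: mult_ac)
    qed
    finally show "(V * V) $$ (i,j) = 1\<^sub>m d $$ (i,j)" using i j by simp
  qed (auto simp: V_def)
  show ?thesis
  proof (intro exI[of _ V] conjI allI impI)
    show "unitary_mat d V" using V VV cadjV by (simp add: unitary_mat_def)
    show "cadj V = V" by fact
    fix j i assume "j < k" "i < d"
    then show "V $$ (i,j) = (if i = j then 1 else 0)" using wj k by (simp add: V_def)
  next
    fix i assume i: "i < d"
    have "V $$ (i,k) = (if i = k then 1 else 0) - complex_of_real (c * (1 - r)) * w i"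
      using i k wk by (simp add: V_def mult_ac)
    then show "V $$ (i,k) = z $ i" using cr by (simp add: w_def)
  qed
qed

lemma complex_eigvec: assumes S: "(S::complex mat) \<in> carrier_mat n n" and n: "0 < n"
  shows "\<exists>\<mu> y. y \<in> carrier_vec n \<and> y \<noteq> 0\<^sub>v n \<and> S *\<^sub>v y = \<mu> \<cdot>\<^sub>v y"
proof -
  obtain as where cp: "char_poly S = (\<Prod>a\<leftarrow>as. [:- a, 1:])" and len: "length as = n"
    using char_poly_factorized[OF S] by blast
  then obtain a rest where as: "as = a # rest" using n by (cases as) auto
  have "poly (char_poly S) a = 0" unfolding cp as by (simp add: poly_prod_list)
  then have "eigenvalue S a" using eigenvalue_root_char_poly[OF S] by simp
  from find_eigenvector[OF S this] have "eigenvector S (find_eigenvector S a) a" .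
  then show ?thesis using S unfolding eigenvector_def by auto
qed

lemma spectral_step:
  assumes A: "hermitian_mat d A" and U: "unitary_mat d U" and k: "k < d"
    and diag: "\<forall>i<d. \<forall>j<k. i \<noteq> j \<longrightarrow> (cadj U * A * U) $$ (i,j) = 0"
  shows "\<exists>U'. unitary_mat d U' \<and> (\<forall>i<d. \<forall>j<Suc k. i \<noteq> j \<longrightarrow> (cadj U' * A * U') $$ (i,j) = 0)"
proof -
  note u = unitaryD[OF U]
  have Ac: "A \<in> carrier_mat d d" and cA: "cadj A = A" using A by (auto simp: hermitian_mat_def)
  have as: "\<And>A B C. A \<in> carrier_mat d d \<Longrightarrow> B \<in> carrier_mat d d \<Longrightarrow> C \<in> carrier_mat d d \<Longrightarrow> A*B*C = A*(B*C)"
    by (rule assoc_mult_mat)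
  have mc: "\<And>A B. A \<in> carrier_mat d d \<Longrightarrow> B \<in> carrier_mat d d \<Longrightarrow> A*B \<in> carrier_mat d d"
    by auto
  define T where "T = cadj U * A * U"
  have T: "T \<in> carrier_mat d d" using u Ac by (simp add: T_def mc)
  have cT: "cadj T = T"
    unfolding T_def using u Ac cA by (simp add: cadj_mult[of _ d d _ d] mc as)
  have Tcol: "\<And>i j. i < d \<Longrightarrow> j < k \<Longrightarrow> i \<noteq> j \<Longrightarrow> T $$ (i,j) = 0"
    using diag by (simp add: T_def)
  have Trow: "\<And>i j. i < k \<Longrightarrow> j < d \<Longrightarrow> i \<noteq> j \<Longrightarrow> T $$ (i,j) = 0"
  proof -
    fix i j assume ij: "i < k" "j < d" "i \<noteq> j"
    have "T $$ (i,j) = cadj T $$ (i,j)" using cT by simp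
    also have "\<dots> = cnj (T $$ (j,i))" using T ij k by simp
    also have "\<dots> = 0" using Tcol[of j i] ij by simp
    finally show "T $$ (i,j) = 0" .
  qed
  define S where "S = mat (d-k) (d-k) (\<lambda>(i,j). T $$ (i+k, j+k))"
  have S: "S \<in> carrier_mat (d-k) (d-k)" by (simp add: S_def)
  obtain \<mu> y where y: "y \<in> carrier_vec (d-k)" and y0: "y \<noteq> 0\<^sub>v (d-k)" and Sy: "S *\<^sub>v y = \<mu> \<cdot>\<^sub>v y"
    using complex_eigvec[OF S] k by auto
  define x where "x = vec d (\<lambda>i. if i < k then 0 else y $ (i-k))"
  have x: "x \<in> carrier_vec d" by (simp add: x_def)
  have Tx: "T *\<^sub>v x = \<mu> \<cdot>\<^sub>v x"
  proof (rule eq_vecI)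
    fix i assume "i < dim_vec (\<mu> \<cdot>\<^sub>v x)"
    then have i: "i < d" by (simp add: x_def)
    have "(T *\<^sub>v x) $ i = (\<Sum>j\<in>{0..<d}. T $$ (i,j) * x $ j)"
      using T i x by (auto simp: scalar_prod_def intro!: sum.cong)
    also have "\<dots> = (\<Sum>j\<in>{0..<k}. T $$ (i,j) * x $ j) + (\<Sum>j\<in>{k..<d}. T $$ (i,j) * x $ j)"
      using k by (simp add: sum.atLeastLessThan_concat)
    also have "(\<Sum>j\<in>{0..<k}. T $$ (i,j) * x $ j) = 0"
      by (rule sum.neutral) (use k in \<open>auto simp: x_def\<close>)
    finally have e1: "(T *\<^sub>v x) $ i = (\<Sum>j\<in>{k..<d}. T $$ (i,j) * x $ j)" by simp
    show "(T *\<^sub>v x) $ i = (\<mu> \<cdot>\<^sub>v x) $ i"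
    proof (cases "i < k")
      case True
      have "(\<Sum>j\<in>{k..<d}. T $$ (i,j) * x $ j) = 0"
        by (rule sum.neutral) (use True Trow in auto)
      then show ?thesis using e1 True i by (simp add: x_def)
    next
      case False
      have "(\<Sum>j\<in>{k..<d}. T $$ (i,j) * x $ j) = (\<Sum>j\<in>{0+k..<(d-k)+k}. T $$ (i,j) * x $ j)"
        using k by simp
      also have "\<dots> = (\<Sum>j\<in>{0..<d-k}. T $$ (i,j+k) * x $ (j+k))"
        by (rule sum.shift_bounds_nat_ivl)
      also have "\<dots> = (\<Sum>j\<in>{0..<d-k}. S $$ (i-k,j) * y $ j)"
        using False i by (auto simp: S_def x_def intro!: sum.cong)
      also have "\<dots> = (S *\<^sub>v y) $ (i-k)"
        using S y False i by (auto simp: scalar_prod_def intro!: sum.cong)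
      also have "\<dots> = \<mu> * y $ (i-k)" using Sy False i y by simp
      finally show ?thesis using e1 False i by (simp add: x_def)
    qed
  qed (use T in \<open>simp add: x_def\<close>)
  obtain j0 where j0: "j0 < d-k" "y $ j0 \<noteq> 0" using y y0 by (metis eq_vecI carrier_vecD index_zero_vec)
  have xj0: "x $ (j0+k) \<noteq> 0" using j0 by (simp add: x_def)
  define nx2 where "nx2 = (\<Sum>i<d. (cmod (x $ i))^2)"
  have nx2: "0 < nx2"
  proof -
    have "0 < (cmod (x $ (j0+k)))^2" using xj0 by simp
    also have "\<dots> \<le> nx2" unfolding nx2_def by (rule member_le_sum) (use j0 in auto)
    finally show ?thesis .
  qed
  define nx where "nx = sqrt nx2"
  have nx: "0 < nx" using nx2 by (simp add: nx_def)
  define \<alpha> where "\<alpha> = (if x $ k = 0 then 1 else cnj (x $ k) / complex_of_real (cmod (x $ k)))"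
  have a1: "cmod \<alpha> = 1" by (simp add: \<alpha>_def norm_divide)
  define z where "z = (\<alpha> / complex_of_real nx) \<cdot>\<^sub>v x"
  have z: "z \<in> carrier_vec d" using x by (simp add: z_def)
  have z0: "\<forall>i<k. z $ i = 0" using k by (simp add: z_def x_def)
  have zn: "(\<Sum>i<d. (cmod (z $ i))^2) = 1"
  proof -
    have "(\<Sum>i<d. (cmod (z $ i))^2) = (\<Sum>i<d. (cmod (x $ i))^2 / nx^2)"
      using x nx by (auto simp: z_def norm_mult norm_divide a1 power_divide intro!: sum.cong)
    also have "\<dots> = nx2 / nx^2" by (simp add: nx2_def sum_divide_distrib)
    also have "\<dots> = 1" using nx2 by (simp add: nx_def)
    finally show ?thesis .
  qed
  have zk: "z $ k = complex_of_real (cmod (x $ k) / nx)"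
  proof (cases "x $ k = 0")
    case True then show ?thesis using k x by (simp add: z_def)
  next
    case False
    have "z $ k = cnj (x $ k) * x $ k / complex_of_real (cmod (x $ k)) / complex_of_real nx"
      using k False x by (simp add: z_def \<alpha>_def)
    also have "cnj (x $ k) * x $ k = complex_of_real ((cmod (x $ k))^2)"
      by (simp add: complex_mult_cnj cmod_power2 mult.commute)
    finally show ?thesis using False by (simp add: power2_eq_square)
  qed
  have Tz: "T *\<^sub>v z = \<mu> \<cdot>\<^sub>v z"
    unfolding z_def using T x by (simp add: mult_mat_vec Tx smult_smult_assoc mult.commute)
  obtain V where V: "unitary_mat d V" and cV: "cadj V = V"
    and Vj: "\<forall>j<k. \<forall>i<d. V $$ (i,j) = (if i = j then 1 else 0)" and Vk: "\<forall>i<d. V $$ (i,k) = z $ i"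
    using householder[OF z k z0 zn zk] by blast
  note v = unitaryD[OF V]
  have VV: "V * V = 1\<^sub>m d" using v cV by simp
  have eq: "cadj (U * V) * A * (U * V) = V * (T * V)"
    unfolding T_def using u v cV Ac by (simp add: cadj_mult[of _ d d _ d] mc as)
  show ?thesis
  proof (intro exI[of _ "U * V"] conjI allI impI)
    show "unitary_mat d (U * V)" by (rule unitary_mult[OF U V])
    fix i j assume i: "i < d" and j: "j < Suc k" and ij: "i \<noteq> j"
    have jd: "j < d" using j k by simp
    have VTV: "(V * (T * V)) $$ (i,j) = (\<Sum>m\<in>{0..<d}. V $$ (i,m) * (T * V) $$ (m,j))"
      using v T i jd by (auto simp: scalar_prod_def intro!: sum.cong)
    have TV: "\<And>m. m < d \<Longrightarrow> (T * V) $$ (m,j) = (\<Sum>l\<in>{0..<d}. T $$ (m,l) * V $$ (l,j))"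
      using v T jd by (auto simp: scalar_prod_def intro!: sum.cong)
    show "(cadj (U * V) * A * (U * V)) $$ (i,j) = 0"
    proof (cases "j < k")
      case True
      have "\<And>m. m < d \<Longrightarrow> (T * V) $$ (m,j) = (if m = j then T $$ (j,j) else 0)"
      proof -
        fix m assume m: "m < d"
        have "(T * V) $$ (m,j) = (\<Sum>l\<in>{0..<d}. T $$ (m,l) * (if l = j then 1 else 0))"
          using TV[OF m] Vj True by (auto intro!: sum.cong)
        also have "\<dots> = T $$ (m,j)" using jd by (simp add: sum_delta_mult')
        finally show "(T * V) $$ (m,j) = (if m = j then T $$ (j,j) else 0)"
          using Tcol[of m j] m True by auto
      qed
      then have "(V * (T * V)) $$ (i,j) = (\<Sum>m\<in>{0..<d}. V $$ (i,m) * (if m = j then T $$ (j,j) else 0))"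
        unfolding VTV by (auto intro!: sum.cong)
      also have "\<dots> = V $$ (i,j) * T $$ (j,j)" using jd by (simp add: sum_delta_mult')
      also have "\<dots> = 0" using Vj True i ij by simp
      finally show ?thesis using eq by simp
    next
      case False
      then have jk: "j = k" using j by simp
      have "\<And>m. m < d \<Longrightarrow> (T * V) $$ (m,j) = \<mu> * V $$ (m,j)"
      proof -
        fix m assume m: "m < d"
        have "(T * V) $$ (m,j) = (\<Sum>l\<in>{0..<d}. T $$ (m,l) * z $ l)"
          using TV[OF m] Vk jk by (auto intro!: sum.cong)
        also have "\<dots> = (T *\<^sub>v z) $ m" using T z m by (auto simp: scalar_prod_def intro!: sum.cong)
        also have "\<dots> = \<mu> * z $ m" using Tz m z by simp
        finally show "(T * V) $$ (m,j) = \<mu> * V $$ (m,j)" using Vk m jk by simp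
      qed
      then have "(V * (T * V)) $$ (i,j) = \<mu> * (\<Sum>m\<in>{0..<d}. V $$ (i,m) * V $$ (m,j))"
        unfolding VTV by (auto simp: sum_distrib_left mult_ac intro!: sum.cong)
      also have "(\<Sum>m\<in>{0..<d}. V $$ (i,m) * V $$ (m,j)) = (V * V) $$ (i,j)"
        using v i jd by (auto simp: scalar_prod_def intro!: sum.cong)
      also have "\<dots> = 0" using VV i jd ij by simp
      finally show ?thesis using eq by simp
    qed
  qed
qed

lemma unitary_one: "unitary_mat d (1\<^sub>m d)"
  by (simp add: unitary_mat_def)

lemma spectral_k: assumes A: "hermitian_mat d A"
  shows "k \<le> d \<Longrightarrow> \<exists>U. unitary_mat d U \<and> (\<forall>i<d. \<forall>j<k. i \<noteq> j \<longrightarrow> (cadj U * A * U) $$ (i,j) = 0)"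
proof (induction k)
  case 0
  show ?case using unitary_one by blast
next
  case (Suc k)
  then obtain U where "unitary_mat d U" "\<forall>i<d. \<forall>j<k. i \<noteq> j \<longrightarrow> (cadj U * A * U) $$ (i,j) = 0"
    by auto
  then show ?case using spectral_step[OF A] Suc(2) by simp
qed

lemma spectral: assumes A: "hermitian_mat d A"
  shows "\<exists>U l. unitary_mat d U \<and> A = U * rdiag d l * cadj U"
proof -
  obtain U where U: "unitary_mat d U" and diag: "\<forall>i<d. \<forall>j<d. i \<noteq> j \<longrightarrow> (cadj U * A * U) $$ (i,j) = 0"
    using spectral_k[OF A, of d] by auto
  note u = unitaryD[OF U]
  have Ac: "A \<in> carrier_mat d d" and cA: "cadj A = A" using A by (auto simp: hermitian_mat_def)
  have as: "\<And>A B C. A \<in> carrier_mat d d \<Longrightarrow> B \<in> carrier_mat d d \<Longrightarrow> C \<in> carrier_mat d d \<Longrightarrow> A*B*C = A*(B*C)"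
    by (rule assoc_mult_mat)
  have mc: "\<And>A B. A \<in> carrier_mat d d \<Longrightarrow> B \<in> carrier_mat d d \<Longrightarrow> A*B \<in> carrier_mat d d"
    by auto
  define T where "T = cadj U * A * U"
  have T: "T \<in> carrier_mat d d" using u Ac by (simp add: T_def mc)
  have cT: "cadj T = T"
    unfolding T_def using u Ac cA by (simp add: cadj_mult[of _ d d _ d] mc as)
  define l where "l = (\<lambda>i. Re (T $$ (i,i)))"
  have Tl: "T = rdiag d l"
  proof (rule eq_matI)
    fix i j assume ij: "i < dim_row (rdiag d l)" "j < dim_col (rdiag d l)"
    show "T $$ (i,j) = rdiag d l $$ (i,j)"
    proof (cases "i = j")
      case True
      have "T $$ (i,i) = cnj (T $$ (i,i))"
        using arg_cong[OF cT, of "\<lambda>M. M $$ (i,i)"] T ij by simp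
      then have "Im (T $$ (i,i)) = 0" by (metis cnj.sel(2) complex.expand neg_equal_zero)
      then show ?thesis using True ij by (simp add: l_def complex_eq_iff)
    next
      case False
      then show ?thesis using diag ij by (simp add: T_def)
    qed
  qed (use T in auto)
  have "A = U * T * cadj U"
    unfolding T_def using u Ac by (simp add: as mc as[symmetric, of U "cadj U"])
  then show ?thesis using U Tl by blast
qed



lemma ln_upper1: fixes t :: real assumes "0 < t" "t \<le> 1"
  shows "ln t \<le> (t - 1) - (t - 1)^2 / 2"
proof -
  let ?h = "\<lambda>x::real. (x - 1) - (x - 1)^2 / 2 - ln x"
  have "?h 1 \<le> ?h t"
  proof (rule DERIV_nonpos_imp_nonincreasing[OF assms(2)])
    fix x assume x: "t \<le> x" "x \<le> 1"
    then have x0: "0 < x" using assms by simp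
    have "DERIV ?h x :> (1 - (x - 1) - 1 / x)"
      using x0 by (auto intro!: derivative_eq_intros simp: field_simps power2_eq_square)
    moreover have "1 - (x - 1) - 1 / x \<le> 0"
    proof -
      have "1 - (x - 1) - 1 / x = - ((x - 1)^2 / x)" using x0 by (simp add: field_simps power2_eq_square)
      also have "\<dots> \<le> 0" using x0 by simp
      finally show ?thesis .
    qed
    ultimately show "\<exists>y. DERIV ?h x :> y \<and> y \<le> 0" by blast
  qed
  then show ?thesis by simp
qed

lemma ln_upper2: fixes t :: real assumes "1 \<le> t"
  shows "ln t \<le> (t^2 - 1) / (2 * t)"
proof -
  let ?h = "\<lambda>x::real. x / 2 - 1 / (2 * x) - ln x"
  have "?h 1 \<le> ?h t"
  proof (rule DERIV_nonneg_imp_nondecreasing[OF assms(1)])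
    fix x assume x: "1 \<le> x" "x \<le> t"
    then have x0: "0 < x" by simp
    have "DERIV ?h x :> (1/2 + 1 / (2 * x^2) - 1 / x)"
      using x0 by (auto intro!: derivative_eq_intros simp: field_simps power2_eq_square)
    moreover have "1/2 + 1 / (2 * x^2) - 1 / x \<ge> 0"
    proof -
      have "1/2 + 1 / (2 * x^2) - 1 / x = (x - 1)^2 / (2 * x^2)" using x0 by (simp add: field_simps power2_eq_square)
      also have "\<dots> \<ge> 0" using x0 by simp
      finally show ?thesis .
    qed
    ultimately show "\<exists>y. DERIV ?h x :> y \<and> y \<ge> 0" by blast
  qed
  moreover have "(t^2 - 1) / (2 * t) = t / 2 - 1 / (2 * t)" using assms by (simp add: field_simps power2_eq_square)
  ultimately show ?thesis by simp
qed

lemma g_bound: fixes t M :: real assumes t: "0 \<le> t" and M: "1 \<le> M" and tM: "t^2 \<le> M"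
  shows "2 * t^2 * ln t - t^2 + 1 \<le> (2 + ln M) * (t - 1)^2"
proof (cases "t \<le> 1")
  case True
  have lnM: "0 \<le> ln M" using M by simp
  have "2 * t^2 * ln t - t^2 + 1 \<le> 2 * (t - 1)^2"
  proof (cases "t = 0")
    case True then show ?thesis by simp
  next
    case False
    then have t0: "0 < t" using t by simp
    have "2 * ln t \<le> 2 * (t - 1) - (t - 1)^2" using ln_upper1[OF t0 True] by simp
    then have "t^2 * (2 * ln t) \<le> t^2 * (2 * (t - 1) - (t - 1)^2)"
      by (rule mult_left_mono) simp
    then have "2 * t^2 * ln t \<le> t^2 * (2 * (t - 1) - (t - 1)^2)" by (simp add: mult_ac)
    moreover have "2 * (t - 1)^2 - (t^2 * (2 * (t - 1) - (t - 1)^2) - t^2 + 1) = (1 - t)^4"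
      by (simp add: algebra_simps power2_eq_square power4_eq_xxxx)
    moreover have "0 \<le> (1 - t)^4" by simp
    ultimately show ?thesis by linarith
  qed
  also have "\<dots> \<le> (2 + ln M) * (t - 1)^2"
    using lnM by (simp add: mult_right_mono)
  finally show ?thesis .
next
  case False
  then have t1: "1 \<le> t" by simp
  then have t0: "0 < t" by simp
  have l2: "2 * ln t \<le> ln M"
  proof -
    have "2 * ln t = ln (t^2)" using t0 by (simp add: ln_realpow)
    also have "\<dots> \<le> ln M" using tM t0 M by (subst ln_le_cancel_iff) auto
    finally show ?thesis .
  qed
  have lt: "0 \<le> ln t" using t1 by simp
  have key: "2 * ln t * (2 * t - 1) \<le> (3 * t - 1) * (t - 1)"
  proof -
    have "2 * ln t * (2 * t - 1) \<le> 2 * ((t^2 - 1) / (2 * t)) * (2 * t - 1)"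
    proof (rule mult_right_mono)
      show "2 * ln t \<le> 2 * ((t^2 - 1) / (2 * t))" using ln_upper2[OF t1] by linarith
    qed (use t1 in simp)
    also have "2 * ((t^2 - 1) / (2 * t)) * (2 * t - 1) = (t - 1) * (t + 1) * (2 * t - 1) / t"
      using t0 by (simp add: field_simps power2_eq_square)
    also have "\<dots> \<le> (3 * t - 1) * (t - 1)"
    proof -
      have "(t - 1) * (t + 1) * (2 * t - 1) \<le> (3 * t - 1) * (t - 1) * t"
      proof -
        have "(3 * t - 1) * (t - 1) * t - (t - 1) * (t + 1) * (2 * t - 1) = (t - 1) * (t - 1)^2"
          by (simp add: algebra_simps power2_eq_square)
        moreover have "0 \<le> (t - 1) * (t - 1)^2" using t1 by simp
        ultimately show ?thesis by linarith
      qed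
      then show ?thesis using t0 by (simp add: divide_le_eq)
    qed
    finally show ?thesis .
  qed
  have "2 * t^2 * ln t - t^2 + 1 \<le> (2 + 2 * ln t) * (t - 1)^2"
  proof -
    have "(2 + 2 * ln t) * (t - 1)^2 - (2 * t^2 * ln t - t^2 + 1) = (3 * t - 1) * (t - 1) - 2 * ln t * (2 * t - 1)"
      by (simp add: algebra_simps power2_eq_square)
    then show ?thesis using key by linarith
  qed
  also have "\<dots> \<le> (2 + ln M) * (t - 1)^2"
    using l2 by (intro mult_right_mono) auto
  finally show ?thesis .
qed

lemma pointwise: fixes P Q M :: real assumes P: "0 \<le> P" and Q: "0 < Q" and PM: "P \<le> M * Q" and M: "1 \<le> M"
  shows "P * (ln P - ln Q) \<le> (P - Q) + (2 + ln M) * (sqrt P - sqrt Q)^2"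
proof (cases "P = 0")
  case True
  have "0 \<le> ln M" using M by simp
  then have "Q \<le> (2 + ln M) * Q" using Q by (simp add: algebra_simps)
  then show ?thesis using True Q by simp
next
  case False
  then have P0: "0 < P" using P by simp
  define t where "t = sqrt (P / Q)"
  have t0: "0 < t" using P0 Q by (simp add: t_def)
  have t2: "t^2 = P / Q" using P0 Q by (simp add: t_def)
  have Pt: "P = t^2 * Q" using t2 Q by simp
  have sP: "sqrt P = t * sqrt Q" using P0 Q t0 by (simp add: t_def real_sqrt_divide)
  have tM: "t^2 \<le> M" using PM Q by (simp add: t2 divide_le_eq)
  have "ln P = ln (t^2) + ln Q" unfolding Pt by (rule ln_mult_pos) (use t0 Q in auto)
  also have "ln (t^2) = 2 * ln t" using t0 by (simp add: ln_realpow)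
  finally have lnP: "ln P - ln Q = 2 * ln t" by simp
  have g: "2 * t^2 * ln t - t^2 + 1 \<le> (2 + ln M) * (t - 1)^2"
    using g_bound[of t M] t0 M tM by simp
  have "P * (ln P - ln Q) - (P - Q) = P * (2 * ln t) - (P - Q)" by (simp only: lnP)
  also have "\<dots> = Q * (2 * t^2 * ln t - t^2 + 1)"
    unfolding Pt by (simp add: algebra_simps)
  also have "\<dots> \<le> Q * ((2 + ln M) * (t - 1)^2)"
    using g Q by (simp add: mult_left_mono)
  also have "\<dots> = (2 + ln M) * (sqrt P - sqrt Q)^2"
    using Q by (simp add: sP power2_eq_square algebra_simps)
  finally show ?thesis by simp
qed

lemma sqrt_diff_sq: fixes a b :: real assumes "0 \<le> a" "0 \<le> b"
  shows "(sqrt a - sqrt b)^2 \<le> \<bar>a - b\<bar>"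
proof -
  have "(sqrt a - sqrt b)^2 = \<bar>sqrt a - sqrt b\<bar> * \<bar>sqrt a - sqrt b\<bar>" by (simp add: power2_eq_square)
  also have "\<dots> \<le> \<bar>sqrt a - sqrt b\<bar> * (sqrt a + sqrt b)"
    using assms real_sqrt_ge_zero[OF assms(1)] real_sqrt_ge_zero[OF assms(2)]
    by (intro mult_left_mono) (auto simp: abs_le_iff)
  also have "\<dots> = \<bar>(sqrt a - sqrt b) * (sqrt a + sqrt b)\<bar>" using assms by (simp add: abs_mult)
  also have "(sqrt a - sqrt b) * (sqrt a + sqrt b) = a - b" using assms by (simp add: algebra_simps)
  finally show ?thesis .
qed

lemma sq_sum_le: fixes a b :: real shows "(a + b)^2 \<le> 2 * a^2 + 2 * b^2"
proof -
  have "2 * a^2 + 2 * b^2 - (a + b)^2 = (a - b)^2" by (simp add: power2_eq_square algebra_simps)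
  then show ?thesis by (metis diff_ge_0_iff_ge zero_le_power2)
qed

lemma dsum_left: "(\<Sum>i<d. \<Sum>j<d. f i * g i j) = (\<Sum>i<d. (f i::real) * (\<Sum>j<d. g i j))"
  by (simp add: sum_distrib_left)

lemma dsum_right: "(\<Sum>i<d. \<Sum>j<d. f j * g i j) = (\<Sum>j<d. (f j::real) * (\<Sum>i<d. g i j))"
  by (subst sum.swap) (simp add: sum_distrib_left)

lemma classical_bound:
  fixes p s :: "nat \<Rightarrow> real" and w :: "nat \<Rightarrow> nat \<Rightarrow> real" and d :: nat and \<epsilon> :: real
  assumes d: "0 < d"
    and p0: "\<And>i. i < d \<Longrightarrow> 0 \<le> p i" and p1: "(\<Sum>i<d. p i) = 1"
    and s0: "\<And>i. i < d \<Longrightarrow> 0 \<le> s i" and s1: "(\<Sum>i<d. s i) = 1"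
    and w0: "\<And>i j. i < d \<Longrightarrow> j < d \<Longrightarrow> 0 \<le> w i j"
    and wr: "\<And>i. i < d \<Longrightarrow> (\<Sum>j<d. w i j) = 1"
    and wc: "\<And>j. j < d \<Longrightarrow> (\<Sum>i<d. w i j) = 1"
    and e0: "0 < \<epsilon>" and e2: "\<epsilon> \<le> 2"
    and H: "2 - 2 * (\<Sum>i<d. \<Sum>j<d. sqrt (p i) * sqrt (s j) * w i j) \<le> \<epsilon>"
  shows "(\<Sum>i<d. p i * ln (p i)) - (\<Sum>i<d. \<Sum>j<d. p i * ln ((1 - \<epsilon>/2) * s j + (\<epsilon>/2) / real d) * w i j)
          \<le> 4 * \<epsilon> * (2 + ln (2 * real d / \<epsilon>))"
proof -
  define \<delta> where "\<delta> = \<epsilon> / 2"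
  define q where "q = (\<lambda>j. (1 - \<delta>) * s j + \<delta> / real d)"
  define M where "M = 2 * real d / \<epsilon>"
  define K where "K = 2 + ln M"
  have \<delta>0: "0 < \<delta>" and \<delta>1: "\<delta> \<le> 1" using e0 e2 by (auto simp: \<delta>_def)
  have dpos: "0 < real d" using d by simp
  have qlow: "\<And>j. j < d \<Longrightarrow> \<delta> / real d \<le> q j"
    using s0 \<delta>1 by (simp add: q_def)
  have qpos: "\<And>j. j < d \<Longrightarrow> 0 < q j"
    using qlow \<delta>0 dpos by (meson divide_pos_pos less_le_trans)
  have q1: "(\<Sum>j<d. q j) = 1"
    using s1 dpos by (simp add: q_def sum.distrib sum_distrib_left[symmetric])
  have ple1: "\<And>i. i < d \<Longrightarrow> p i \<le> 1"
  proof -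
    fix i assume i: "i < d"
    have "p i \<le> (\<Sum>i<d. p i)" by (rule member_le_sum) (use i p0 in auto)
    then show "p i \<le> 1" using p1 by simp
  qed
  have M1: "1 \<le> M" using e0 e2 d by (simp add: M_def le_divide_eq)
  have Mdelta: "M * (\<delta> / real d) = 1" using e0 dpos by (simp add: M_def \<delta>_def)
  have PM: "\<And>i j. i < d \<Longrightarrow> j < d \<Longrightarrow> p i \<le> M * q j"
  proof -
    fix i j assume i: "i < d" and j: "j < d"
    have "p i \<le> M * (\<delta> / real d)" unfolding Mdelta by (rule ple1[OF i])
    also have "\<dots> \<le> M * q j" using qlow[OF j] M1 by (intro mult_left_mono) auto
    finally show "p i \<le> M * q j" .
  qed
  have K0: "0 \<le> K" using M1 by (simp add: K_def add_nonneg_nonneg)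
  have ent: "(\<Sum>i<d. p i * ln (p i)) = (\<Sum>i<d. \<Sum>j<d. w i j * (p i * ln (p i)))"
    using wr by (simp add: sum_distrib_right[symmetric])
  have "(\<Sum>i<d. p i * ln (p i)) - (\<Sum>i<d. \<Sum>j<d. p i * ln (q j) * w i j)
      = (\<Sum>i<d. \<Sum>j<d. w i j * (p i * (ln (p i) - ln (q j))))"
    unfolding ent by (simp add: sum_subtractf[symmetric] algebra_simps)
  also have "\<dots> \<le> (\<Sum>i<d. \<Sum>j<d. w i j * ((p i - q j) + K * (sqrt (p i) - sqrt (q j))^2))"
    unfolding K_def
    by (intro sum_mono mult_left_mono pointwise) (auto simp: p0 qpos PM M1 w0)
  also have "\<dots> = (\<Sum>i<d. \<Sum>j<d. w i j * (p i - q j) + K * (w i j * (sqrt (p i) - sqrt (q j))^2))"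
    by (intro sum.cong refl) (simp add: algebra_simps)
  also have "\<dots> = (\<Sum>i<d. \<Sum>j<d. w i j * (p i - q j)) + K * (\<Sum>i<d. \<Sum>j<d. w i j * (sqrt (p i) - sqrt (q j))^2)"
    by (simp only: sum.distrib sum_distrib_left)
  also have "(\<Sum>i<d. \<Sum>j<d. w i j * (p i - q j)) = 0"
  proof -
    have "(\<Sum>i<d. \<Sum>j<d. w i j * (p i - q j)) = (\<Sum>i<d. p i * (\<Sum>j<d. w i j)) - (\<Sum>j<d. q j * (\<Sum>i<d. w i j))"
    proof -
      have "(\<Sum>i<d. \<Sum>j<d. w i j * (p i - q j)) = (\<Sum>i<d. \<Sum>j<d. p i * w i j) - (\<Sum>i<d. \<Sum>j<d. q j * w i j)"
        by (simp add: sum_subtractf algebra_simps)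
      then show ?thesis by (simp only: dsum_left dsum_right)
    qed
    also have "\<dots> = (\<Sum>i<d. p i) - (\<Sum>j<d. q j)" using wr wc by simp
    finally show ?thesis using p1 q1 by simp
  qed
  also have "(\<Sum>i<d. \<Sum>j<d. w i j * (sqrt (p i) - sqrt (q j))^2) \<le> 4 * \<epsilon>"
  proof -
    have "(\<Sum>i<d. \<Sum>j<d. w i j * (sqrt (p i) - sqrt (q j))^2)
        \<le> (\<Sum>i<d. \<Sum>j<d. w i j * (2 * (sqrt (p i) - sqrt (s j))^2 + 2 * (sqrt (s j) - sqrt (q j))^2))"
    proof (intro sum_mono mult_left_mono)
      fix i j
      have "(sqrt (p i) - sqrt (q j))^2 = ((sqrt (p i) - sqrt (s j)) + (sqrt (s j) - sqrt (q j)))^2" by simp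
      also have "\<dots> \<le> 2 * (sqrt (p i) - sqrt (s j))^2 + 2 * (sqrt (s j) - sqrt (q j))^2"
        by (rule sq_sum_le)
      finally show "(sqrt (p i) - sqrt (q j))^2 \<le> 2 * (sqrt (p i) - sqrt (s j))^2 + 2 * (sqrt (s j) - sqrt (q j))^2" .
    next
      fix i j assume "i \<in> {..<d}" "j \<in> {..<d}"
      then show "0 \<le> w i j" using w0 by simp
    qed
    also have "\<dots> = 2 * (\<Sum>i<d. \<Sum>j<d. w i j * (sqrt (p i) - sqrt (s j))^2) + 2 * (\<Sum>i<d. \<Sum>j<d. w i j * (sqrt (s j) - sqrt (q j))^2)"
      by (simp add: sum.distrib sum_distrib_left algebra_simps)
    also have "(\<Sum>i<d. \<Sum>j<d. w i j * (sqrt (p i) - sqrt (s j))^2) \<le> \<epsilon>"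
    proof -
      have "(\<Sum>i<d. \<Sum>j<d. w i j * (sqrt (p i) - sqrt (s j))^2)
          = (\<Sum>i<d. \<Sum>j<d. w i j * p i + w i j * s j - 2 * (sqrt (p i) * sqrt (s j) * w i j))"
        by (intro sum.cong refl) (simp add: power2_eq_square algebra_simps p0 s0)
      also have "\<dots> = (\<Sum>i<d. p i * (\<Sum>j<d. w i j)) + (\<Sum>j<d. s j * (\<Sum>i<d. w i j))
           - 2 * (\<Sum>i<d. \<Sum>j<d. sqrt (p i) * sqrt (s j) * w i j)"
      proof -
        have "(\<Sum>i<d. \<Sum>j<d. w i j * p i + w i j * s j - 2 * (sqrt (p i) * sqrt (s j) * w i j))
          = (\<Sum>i<d. \<Sum>j<d. p i * w i j) + (\<Sum>i<d. \<Sum>j<d. s j * w i j) - 2 * (\<Sum>i<d. \<Sum>j<d. sqrt (p i) * sqrt (s j) * w i j)"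
          by (simp only: sum.distrib sum_subtractf sum_distrib_left mult.commute)
        then show ?thesis by (simp only: dsum_left dsum_right)
      qed
      also have "\<dots> = 2 - 2 * (\<Sum>i<d. \<Sum>j<d. sqrt (p i) * sqrt (s j) * w i j)"
        using wr wc p1 s1 by simp
      finally show ?thesis using H by simp
    qed
    also have "(\<Sum>i<d. \<Sum>j<d. w i j * (sqrt (s j) - sqrt (q j))^2) \<le> \<epsilon>"
    proof -
      have "(\<Sum>i<d. \<Sum>j<d. w i j * (sqrt (s j) - sqrt (q j))^2) = (\<Sum>j<d. (sqrt (s j) - sqrt (q j))^2 * (\<Sum>i<d. w i j))"
        by (simp only: mult.commute[of "w _ _"] dsum_right)
      also have "\<dots> = (\<Sum>j<d. (sqrt (s j) - sqrt (q j))^2)" using wc by simp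
      also have "\<dots> \<le> (\<Sum>j<d. \<bar>s j - q j\<bar>)"
        by (intro sum_mono sqrt_diff_sq) (auto simp: s0 qpos less_imp_le)
      also have "\<dots> \<le> (\<Sum>j<d. \<delta> * (s j + 1 / real d))"
      proof (intro sum_mono)
        fix j assume j: "j \<in> {..<d}"
        have "s j - q j = \<delta> * (s j - 1 / real d)" by (simp add: q_def algebra_simps)
        then have "\<bar>s j - q j\<bar> = \<delta> * \<bar>s j - 1 / real d\<bar>" using \<delta>0 by (simp add: abs_mult)
        also have "\<dots> \<le> \<delta> * (s j + 1 / real d)"
          using \<delta>0 s0[of j] j dpos by (intro mult_left_mono) (auto simp: abs_le_iff)
        finally show "\<bar>s j - q j\<bar> \<le> \<delta> * (s j + 1 / real d)" .
      qed
      also have "\<dots> = \<delta> * ((\<Sum>j<d. s j) + 1)"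
        using dpos by (simp add: sum_distrib_left[symmetric] sum.distrib)
      also have "\<dots> = \<epsilon>" using s1 by (simp add: \<delta>_def)
      finally show ?thesis .
    qed
    finally show ?thesis by simp
  qed
  then have "0 + K * (\<Sum>i<d. \<Sum>j<d. w i j * (sqrt (p i) - sqrt (q j))^2) \<le> 4 * \<epsilon> * K"
    using K0 by (simp add: mult_left_mono mult.commute)
  finally show ?thesis by (simp add: K_def M_def q_def \<delta>_def)
qed



lemma ctrace_add: "X \<in> carrier_mat n n \<Longrightarrow> Y \<in> carrier_mat n n \<Longrightarrow> ctrace (X + Y) = ctrace X + ctrace Y"
  by (simp add: ctrace_def sum.distrib)

lemma ctrace_minus: "X \<in> carrier_mat n n \<Longrightarrow> Y \<in> carrier_mat n n \<Longrightarrow> ctrace (X - Y) = ctrace X - ctrace Y"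
  by (simp add: ctrace_def sum_subtractf)

lemma psd_eig: assumes A: "psd_mat d A" and U: "unitary_mat d U" and Ad: "A = U * rdiag d l * cadj U" and i: "i < d"
  shows "0 \<le> l i"
proof -
  note u = unitaryD[OF U]
  have Ac: "A \<in> carrier_mat d d" and pos: "\<And>v. v \<in> carrier_vec d \<Longrightarrow> 0 \<le> Re (conjugate v \<bullet> (A *\<^sub>v v))"
    using A by (auto simp: psd_mat_def hermitian_mat_def)
  have as: "\<And>A B C. A \<in> carrier_mat d d \<Longrightarrow> B \<in> carrier_mat d d \<Longrightarrow> C \<in> carrier_mat d d \<Longrightarrow> A*B*C = A*(B*C)"
    by (rule assoc_mult_mat)
  have mc: "\<And>A B. A \<in> carrier_mat d d \<Longrightarrow> B \<in> carrier_mat d d \<Longrightarrow> A*B \<in> carrier_mat d d"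
    by auto
  have c1: "\<And>X. X \<in> carrier_mat d d \<Longrightarrow> cadj U * (U * X) = X"
    using u by (simp add: as[symmetric] mc)
  have D: "cadj U * A * U = rdiag d l"
    unfolding Ad using u by (simp add: as mc c1)
  define v where "v = col U i"
  have v: "v \<in> carrier_vec d" using u i by (simp add: v_def)
  have rw: "row (cadj U) i = conjugate v"
    using u i by (intro eq_vecI) (auto simp: v_def conjugate_complex_def)
  have "(cadj U * A * U) $$ (i,i) = (cadj U * (A * U)) $$ (i,i)"
    using u Ac by (simp add: as)
  also have "\<dots> = row (cadj U) i \<bullet> col (A * U) i" using u Ac i by simp
  also have "\<dots> = conjugate v \<bullet> (A *\<^sub>v v)" unfolding rw v_def
    by (subst col_mult2[of A d d U d i]) (use u Ac i in simp_all)
  finally have "complex_of_real (l i) = conjugate v \<bullet> (A *\<^sub>v v)" using D i by simp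
  then have "l i = Re (conjugate v \<bullet> (A *\<^sub>v v))" by (metis Re_complex_of_real)
  then show ?thesis using pos[OF v] by simp
qed

lemma depolarize_eq: assumes V: "unitary_mat d V" and S: "S = V * rdiag d s * cadj V"
  shows "depolarize d e S = V * rdiag d (\<lambda>j. (1 - e) * s j + e / real d) * cadj V"
proof -
  note v = unitaryD[OF V]
  have as: "\<And>A B C. A \<in> carrier_mat d d \<Longrightarrow> B \<in> carrier_mat d d \<Longrightarrow> C \<in> carrier_mat d d \<Longrightarrow> A*B*C = A*(B*C)"
    by (rule assoc_mult_mat)
  let ?a = "complex_of_real (1 - e)" and ?b = "complex_of_real (e / real d)"
  have R: "rdiag d (\<lambda>j. (1 - e) * s j + e / real d) = ?a \<cdot>\<^sub>m rdiag d s + ?b \<cdot>\<^sub>m 1\<^sub>m d"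
    by (rule eq_matI) auto
  have "V * rdiag d (\<lambda>j. (1 - e) * s j + e / real d) * cadj V = (V * (?a \<cdot>\<^sub>m rdiag d s) + V * (?b \<cdot>\<^sub>m 1\<^sub>m d)) * cadj V"
    unfolding R by (subst mult_add_distrib_mat[of _ d d]) (use v in auto)
  also have "\<dots> = (?a \<cdot>\<^sub>m (V * rdiag d s) + ?b \<cdot>\<^sub>m (V * 1\<^sub>m d)) * cadj V"
    by (subst (1 2) mult_smult_distrib[of _ d d]) (use v in auto)
  also have "\<dots> = (?a \<cdot>\<^sub>m (V * rdiag d s)) * cadj V + (?b \<cdot>\<^sub>m (V * 1\<^sub>m d)) * cadj V"
    by (subst add_mult_distrib_mat[of _ d d]) (use v in auto)
  also have "\<dots> = ?a \<cdot>\<^sub>m (V * rdiag d s * cadj V) + ?b \<cdot>\<^sub>m (V * 1\<^sub>m d * cadj V)"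
    by (subst (1 2) mult_smult_assoc_mat[of _ d d]) (use v in auto)
  also have "\<dots> = depolarize d e S" unfolding S depolarize_def using v by simp
  finally show ?thesis by simp
qed

theorem proposition2p35:
  fixes d :: nat and \<rho> \<sigma> :: "complex mat" and \<epsilon> :: real
  assumes "quantum_state d \<rho>" and "quantum_state d \<sigma>"
    and "0 < \<epsilon>" and "\<epsilon> \<le> 2"
    and "hellinger_sq d \<rho> \<sigma> \<le> \<epsilon>"
  shows "rel_entropy d \<rho> (depolarize d (\<epsilon> / 2) \<sigma>)
           \<le> 4 * \<epsilon> * (2 + ln (2 * real d / \<epsilon>))"
proof -
  have psd\<rho>: "psd_mat d \<rho>" and tr\<rho>: "ctrace \<rho> = 1" and psd\<sigma>: "psd_mat d \<sigma>" and tr\<sigma>: "ctrace \<sigma> = 1"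
    using assms(1,2) by (auto simp: quantum_state_def)
  have h\<rho>: "hermitian_mat d \<rho>" and h\<sigma>: "hermitian_mat d \<sigma>"
    using psd\<rho> psd\<sigma> by (auto simp: psd_mat_def)
  have \<rho>c: "\<rho> \<in> carrier_mat d d" using h\<rho> by (simp add: hermitian_mat_def)
  have d: "0 < d"
  proof (rule ccontr)
    assume "\<not> 0 < d"
    then have "d = 0" by simp
    then have "ctrace \<rho> = 0" using \<rho>c by (simp add: ctrace_def)
    then show False using tr\<rho> by simp
  qed
  obtain U p where U: "unitary_mat d U" and \<rho>U: "\<rho> = U * rdiag d p * cadj U"
    using spectral[OF h\<rho>] by blast
  obtain V s where V: "unitary_mat d V" and \<sigma>V: "\<sigma> = V * rdiag d s * cadj V"
    using spectral[OF h\<sigma>] by blast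
  note u = unitaryD[OF U] and v = unitaryD[OF V]
  have p0: "\<And>i. i < d \<Longrightarrow> 0 \<le> p i" using psd_eig[OF psd\<rho> U \<rho>U] .
  have s0: "\<And>i. i < d \<Longrightarrow> 0 \<le> s i" using psd_eig[OF psd\<sigma> V \<sigma>V] .
  have p1: "(\<Sum>i<d. p i) = 1"
  proof -
    have "complex_of_real (\<Sum>i<d. p i) = ctrace \<rho>" unfolding \<rho>U by (rule ctrace_udiag[OF U, symmetric])
    then have "complex_of_real (\<Sum>i<d. p i) = 1" using tr\<rho> by (simp only:)
    then show ?thesis by (simp only: of_real_eq_1_iff)
  qed
  have s1: "(\<Sum>i<d. s i) = 1"
  proof -
    have "complex_of_real (\<Sum>i<d. s i) = ctrace \<sigma>" unfolding \<sigma>V by (rule ctrace_udiag[OF V, symmetric])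
    then have "complex_of_real (\<Sum>i<d. s i) = 1" using tr\<sigma> by (simp only:)
    then show ?thesis by (simp only: of_real_eq_1_iff)
  qed
  define q where "q = (\<lambda>j. (1 - \<epsilon> / 2) * s j + (\<epsilon> / 2) / real d)"
  have \<sigma>'V: "depolarize d (\<epsilon> / 2) \<sigma> = V * rdiag d q * cadj V"
    unfolding q_def by (rule depolarize_eq[OF V \<sigma>V])
  define W where "W = cadj U * V"
  have W: "unitary_mat d W" unfolding W_def by (rule unitary_mult[OF unitary_cadj[OF U] V])
  define w where "w = (\<lambda>i j. (cmod (W $$ (i,j)))^2)"
  have wr: "\<And>i. i < d \<Longrightarrow> (\<Sum>j<d. w i j) = 1" unfolding w_def by (rule unitary_row_norm[OF W])
  have wc: "\<And>j. j < d \<Longrightarrow> (\<Sum>i<d. w i j) = 1" unfolding w_def by (rule unitary_col_norm[OF W])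
  have w0: "\<And>i j. i < d \<Longrightarrow> j < d \<Longrightarrow> 0 \<le> w i j" by (simp add: w_def)
  have sq\<rho>: "msqrt d \<rho> = U * rdiag d (sqrt \<circ> p) * cadj U"
    unfolding msqrt_def by (rule mat_fun_eq[OF U \<rho>U])
  have sq\<sigma>: "msqrt d \<sigma> = V * rdiag d (sqrt \<circ> s) * cadj V"
    unfolding msqrt_def by (rule mat_fun_eq[OF V \<sigma>V])
  have ln\<rho>: "mln d \<rho> = U * rdiag d (ln \<circ> p) * cadj U"
    unfolding mln_def by (rule mat_fun_eq[OF U \<rho>U])
  have ln\<sigma>': "mln d (depolarize d (\<epsilon> / 2) \<sigma>) = V * rdiag d (ln \<circ> q) * cadj V"
    unfolding mln_def by (rule mat_fun_eq[OF V \<sigma>'V])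
  define A where "A = U * rdiag d (sqrt \<circ> p) * cadj U"
  define B where "B = V * rdiag d (sqrt \<circ> s) * cadj V"
  have Ac: "A \<in> carrier_mat d d" and Bc: "B \<in> carrier_mat d d" using u v by (auto simp: A_def B_def)
  have AA: "ctrace (A * A) = 1"
  proof -
    have "ctrace (A * A) = of_real (\<Sum>i<d. (sqrt \<circ> p) i * (sqrt \<circ> p) i)"
      unfolding A_def udiag_mult[OF U] ctrace_udiag[OF U] ..
    also have "(\<Sum>i<d. (sqrt \<circ> p) i * (sqrt \<circ> p) i) = (\<Sum>i<d. p i)"
      by (rule sum.cong) (auto simp: p0)
    finally show ?thesis using p1 by simp
  qed
  have BB: "ctrace (B * B) = 1"
  proof -
    have "ctrace (B * B) = of_real (\<Sum>i<d. (sqrt \<circ> s) i * (sqrt \<circ> s) i)"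
      unfolding B_def udiag_mult[OF V] ctrace_udiag[OF V] ..
    also have "(\<Sum>i<d. (sqrt \<circ> s) i * (sqrt \<circ> s) i) = (\<Sum>i<d. s i)"
      by (rule sum.cong) (auto simp: s0)
    finally show ?thesis using s1 by simp
  qed
  define X where "X = (\<Sum>i<d. \<Sum>j<d. sqrt (p i) * sqrt (s j) * w i j)"
  have AB: "ctrace (A * B) = of_real X"
    unfolding A_def B_def ctrace_two[OF U V] X_def w_def W_def by simp
  have BA: "ctrace (B * A) = of_real X"
    using AB ctrace_comm[OF Ac Bc] by simp
  have "(A - B) * (A - B) = (A * A - A * B) - (B * A - B * B)"
  proof -
    have AB': "A - B \<in> carrier_mat d d" using Ac Bc by (simp add: minus_carrier_mat)
    have "(A - B) * (A - B) = A * (A - B) - B * (A - B)"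
      by (rule minus_mult_distrib_mat[OF Ac Bc AB'])
    also have "A * (A - B) = A * A - A * B" by (rule mult_minus_distrib_mat[OF Ac Ac Bc])
    also have "B * (A - B) = B * A - B * B" by (rule mult_minus_distrib_mat[OF Bc Ac Bc])
    finally show ?thesis .
  qed
  then have "ctrace ((A - B) * (A - B)) = (ctrace (A * A) - ctrace (A * B)) - (ctrace (B * A) - ctrace (B * B))"
  proof -
    have c: "A * A \<in> carrier_mat d d" "A * B \<in> carrier_mat d d" "B * A \<in> carrier_mat d d" "B * B \<in> carrier_mat d d"
      using Ac Bc by auto
    have c2: "A * A - A * B \<in> carrier_mat d d" "B * A - B * B \<in> carrier_mat d d"
      using c by (auto simp: minus_carrier_mat)
    show ?thesis unfolding \<open>(A - B) * (A - B) = _\<close> ctrace_minus[OF c2] ctrace_minus[OF c(1,2)] ctrace_minus[OF c(3,4)] ..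
  qed
  then have "hellinger_sq d \<rho> \<sigma> = 2 - 2 * X"
    unfolding hellinger_sq_def sq\<rho> sq\<sigma> A_def[symmetric] B_def[symmetric] AA BB AB BA by simp
  then have H: "2 - 2 * X \<le> \<epsilon>" using assms(5) by simp
  have e1: "ctrace (\<rho> * mln d \<rho>) = of_real (\<Sum>i<d. p i * ln (p i))"
    unfolding ln\<rho> unfolding \<rho>U udiag_mult[OF U] ctrace_udiag[OF U] by simp
  have e2: "ctrace (\<rho> * mln d (depolarize d (\<epsilon> / 2) \<sigma>)) = of_real (\<Sum>i<d. \<Sum>j<d. p i * ln (q j) * w i j)"
    unfolding \<rho>U ln\<sigma>' ctrace_two[OF U V] w_def W_def by simp
  have "rel_entropy d \<rho> (depolarize d (\<epsilon> / 2) \<sigma>) = (\<Sum>i<d. p i * ln (p i)) - (\<Sum>i<d. \<Sum>j<d. p i * ln (q j) * w i j)"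
  proof -
    have "\<rho> * (mln d \<rho> - mln d (depolarize d (\<epsilon> / 2) \<sigma>)) = \<rho> * mln d \<rho> - \<rho> * mln d (depolarize d (\<epsilon> / 2) \<sigma>)"
      unfolding ln\<rho> ln\<sigma>' using \<rho>c u v by (subst mult_minus_distrib_mat[of _ d d]) auto
    then have "ctrace (\<rho> * (mln d \<rho> - mln d (depolarize d (\<epsilon> / 2) \<sigma>))) = ctrace (\<rho> * mln d \<rho>) - ctrace (\<rho> * mln d (depolarize d (\<epsilon> / 2) \<sigma>))"
      unfolding ln\<rho> ln\<sigma>' using \<rho>c u v by (simp add: ctrace_minus[of _ d])
    then show ?thesis unfolding rel_entropy_def e1 e2 by simp
  qed
  also have "\<dots> \<le> 4 * \<epsilon> * (2 + ln (2 * real d / \<epsilon>))"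
    unfolding q_def
    by (rule classical_bound[OF d p0 p1 s0 s1 w0 wr wc assms(3,4)]) (use H in \<open>simp_all add: X_def\<close>)
  finally show ?thesis .
qed


end
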